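(* Every weakly Rayleigh set-system $\mathcal{Q}\subseteq 2^E$ ($E$ finite) is convex.
   Context: For $\omega:2^E\to[0,\infty)$ not identically zero, $Z(\omega;\mathbf{y})=\sum_S\omega(S)\prod_{e\in S}y_e$; with subscripts denoting partial derivatives, $Z$ is Rayleigh if $Z_eZ_f-Z_{ef}Z\ge0$ for all distinct $e,f$ and all positive $\mathbf{y}$. $\mathcal{Q}$ is weakly Rayleigh if some $\omega\ge0$ with $\{S:\omega(S)>0\}=\mathcal{Q}$ has $Z(\omega;\mathbf{y})$ Rayleigh. $\mathcal{Q}$ is convex if $S\subseteq T\subseteq S'$ with $S,S'\in\mathcal{Q}$ implies $T\in\mathcal{Q}$. *)

theory Defs
  imports "HOL-Analysis.Analysis"
begin

definition Zpoly :: "'a set \<Rightarrow> ('a set \<Rightarrow> real) \<Rightarrow> ('a \<Rightarrow> real) \<Rightarrow> real" where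
  "Zpoly E \<omega> y = (\<Sum>S\<in>Pow E. \<omega> S * (\<Prod>e\<in>S. y e))"

definition pderiv1 :: "(('a \<Rightarrow> real) \<Rightarrow> real) \<Rightarrow> 'a \<Rightarrow> ('a \<Rightarrow> real) \<Rightarrow> real" where
  "pderiv1 F e y = deriv (\<lambda>t. F (y(e := t))) (y e)"

definition rayleigh :: "'a set \<Rightarrow> ('a set \<Rightarrow> real) \<Rightarrow> bool" where
  "rayleigh E \<omega> \<longleftrightarrow>
     (\<forall>e\<in>E. \<forall>f\<in>E. e \<noteq> f \<longrightarrow>
       (\<forall>y. (\<forall>x\<in>E. y x > 0) \<longrightarrow>
          pderiv1 (Zpoly E \<omega>) e y * pderiv1 (Zpoly E \<omega>) f y
          - pderiv1 (pderiv1 (Zpoly E \<omega>) f) e y * Zpoly E \<omega> y \<ge> 0))"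

text \<open>Q subset of 2^E is weakly Rayleigh: some omega : 2^E -> [0,inf) with support exactly Q
  has Rayleigh generating polynomial. (omega not identically zero is implicit when Q nonempty;
  we require it explicitly.)\<close>
definition weakly_rayleigh :: "'a set \<Rightarrow> 'a set set \<Rightarrow> bool" where
  "weakly_rayleigh E Q \<longleftrightarrow>
     (\<exists>\<omega>. (\<forall>S. \<omega> S \<ge> 0) \<and> (\<exists>S\<in>Pow E. \<omega> S \<noteq> 0) \<and>
          {S\<in>Pow E. \<omega> S > 0} = Q \<and> rayleigh E \<omega>)"

definition convex_setsys :: "'a set set \<Rightarrow> bool" where
  "convex_setsys Q \<longleftrightarrow> (\<forall>S T S'. S \<in> Q \<longrightarrow> S' \<in> Q \<longrightarrow> S \<subseteq> T \<longrightarrow> T \<subseteq> S' \<longrightarrow> T \<in> Q)"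

end

theory Submission imports Defs begin

lemma affine_form:
  fixes c :: "'b \<Rightarrow> real" and y :: "'a \<Rightarrow> real"
  assumes "finite P" "\<forall>S\<in>P. finite (g S)"
  shows "(\<Sum>S\<in>P. c S * (\<Prod>x\<in>g S. (y(e:=t)) x)) =
    (\<Sum>S\<in>P. c S * (if e \<in> g S then 0 else \<Prod>x\<in>g S. y x)) +
    t * (\<Sum>S\<in>{S\<in>P. e \<in> g S}. c S * (\<Prod>x\<in>g S - {e}. y x))"
proof -
  have "(\<Sum>S\<in>{S\<in>P. e \<in> g S}. c S * (\<Prod>x\<in>g S - {e}. y x))
     = (\<Sum>S\<in>P. if e \<in> g S then c S * (\<Prod>x\<in>g S - {e}. y x) else 0)"
    using assms(1) by (simp add: sum.inter_filter)
  moreover have "(\<Sum>S\<in>P. c S * (\<Prod>x\<in>g S. (y(e:=t)) x)) =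
    (\<Sum>S\<in>P. c S * (if e \<in> g S then 0 else \<Prod>x\<in>g S. y x) + t * (if e \<in> g S then c S * (\<Prod>x\<in>g S - {e}. y x) else 0))"
  proof (rule sum.cong[OF refl])
    fix S assume S: "S \<in> P"
    show "c S * (\<Prod>x\<in>g S. (y(e:=t)) x) = c S * (if e \<in> g S then 0 else \<Prod>x\<in>g S. y x) + t * (if e \<in> g S then c S * (\<Prod>x\<in>g S - {e}. y x) else 0)"
    proof (cases "e \<in> g S")
      case True
      have "(\<Prod>x\<in>g S. (y(e:=t)) x) = (y(e:=t)) e * (\<Prod>x\<in>g S - {e}. (y(e:=t)) x)"
        using True assms S by (simp add: prod.remove)
      also have "(\<Prod>x\<in>g S - {e}. (y(e:=t)) x) = (\<Prod>x\<in>g S - {e}. y x)"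
        by (rule prod.cong) auto
      finally show ?thesis using True by (simp add: algebra_simps)
    next
      case False
      have "(\<Prod>x\<in>g S. (y(e:=t)) x) = (\<Prod>x\<in>g S. y x)"
        using False by (intro prod.cong) auto
      then show ?thesis using False by simp
    qed
  qed
  ultimately show ?thesis by (simp add: sum.distrib sum_distrib_left)
qed

lemma deriv_form:
  fixes c :: "'b \<Rightarrow> real" and y :: "'a \<Rightarrow> real"
  assumes "finite P" "\<forall>S\<in>P. finite (g S)"
  shows "deriv (\<lambda>t. (\<Sum>S\<in>P. c S * (\<Prod>x\<in>g S. (y(e:=t)) x))) z =
    (\<Sum>S\<in>{S\<in>P. e \<in> g S}. c S * (\<Prod>x\<in>g S - {e}. y x))"
proof -
  let ?A = "(\<Sum>S\<in>P. c S * (if e \<in> g S then 0 else \<Prod>x\<in>g S. y x))"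
  let ?B = "(\<Sum>S\<in>{S\<in>P. e \<in> g S}. c S * (\<Prod>x\<in>g S - {e}. y x))"
  have eq: "(\<lambda>t. (\<Sum>S\<in>P. c S * (\<Prod>x\<in>g S. (y(e:=t)) x))) = (\<lambda>t. ?A + t * ?B)"
    by (rule ext, rule affine_form[OF assms])
  have "((\<lambda>t. ?A + t * ?B) has_real_derivative ?B) (at z)"
    by (auto intro!: derivative_eq_intros)
  then show ?thesis unfolding eq by (rule DERIV_imp_deriv)
qed

lemma pd1:
  assumes "finite E"
  shows "pderiv1 (Zpoly E \<omega>) f = (\<lambda>y. \<Sum>S\<in>{S\<in>Pow E. f \<in> S}. \<omega> S * (\<Prod>x\<in>S - {f}. y x))"
proof
  fix y
  show "pderiv1 (Zpoly E \<omega>) f y = (\<Sum>S\<in>{S\<in>Pow E. f \<in> S}. \<omega> S * (\<Prod>x\<in>S - {f}. y x))"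
    unfolding pderiv1_def Zpoly_def
    using deriv_form[of "Pow E" "\<lambda>S. S" \<omega> y f "y f"] assms
    by (auto intro: finite_subset)
qed

lemma pd2:
  assumes "finite E"
  shows "pderiv1 (pderiv1 (Zpoly E \<omega>) f) e y = (\<Sum>S\<in>{S\<in>{S\<in>Pow E. f \<in> S}. e \<in> S - {f}}. \<omega> S * (\<Prod>x\<in>S - {f} - {e}. y x))"
  unfolding pd1[OF assms] pderiv1_def
  using deriv_form[of "{S\<in>Pow E. f \<in> S}" "\<lambda>S. S - {f}" \<omega> y e "y e"] assms
  by (auto intro: finite_subset)


lemma prod_drop_ones:
  fixes y :: "'a \<Rightarrow> real"
  assumes "finite A" "\<forall>x\<in>B. y x = 1"
  shows "(\<Prod>x\<in>A - B. y x) = (\<Prod>x\<in>A. y x)"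
  using assms by (intro prod.mono_neutral_left) auto

theorem corollary4p3:
  fixes E :: "'a set" and Q :: "'a set set"
  assumes "finite E" and "Q \<subseteq> Pow E" and "weakly_rayleigh E Q"
  shows "convex_setsys Q"
proof -
  obtain \<omega> where w0: "\<forall>S. \<omega> S \<ge> 0" and wQ: "{S\<in>Pow E. \<omega> S > 0} = Q"
    and ray: "rayleigh E \<omega>"
    using assms(3) unfolding weakly_rayleigh_def by blast
  have finE: "finite E" by fact
  have main: "\<forall>S T S'. card (S' - S) = n \<longrightarrow> S \<in> Q \<longrightarrow> S' \<in> Q \<longrightarrow> S \<subseteq> T \<longrightarrow> T \<subseteq> S' \<longrightarrow> T \<in> Q" for n
  proof (induction n rule: less_induct)
    case (less n)
    have IH: "\<And>S T S'. card (S' - S) < n \<Longrightarrow> S \<in> Q \<Longrightarrow> S' \<in> Q \<Longrightarrow> S \<subseteq> T \<Longrightarrow> T \<subseteq> S' \<Longrightarrow> T \<in> Q"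
      using less by blast
    show ?case
    proof (intro allI impI, rule ccontr)
      fix S T S'
      assume n: "card (S' - S) = n" and SQ: "S \<in> Q" and S'Q: "S' \<in> Q" and ST: "S \<subseteq> T"
        and TS': "T \<subseteq> S'" and TQ: "T \<notin> Q"
      have S'E: "S' \<subseteq> E" using S'Q assms(2) by auto
      have SE: "S \<subseteq> E" using SQ assms(2) by auto
      have finS': "finite S'" using S'E finE finite_subset by blast
      have finS: "finite S" using SE finE finite_subset by blast
      have "T \<noteq> S" using TQ SQ by auto
      then obtain e where e: "e \<in> T" "e \<notin> S" using ST by blast
      have "T \<noteq> S'" using TQ S'Q by auto
      then obtain f where f: "f \<in> S'" "f \<notin> T" using TS' by blast
      have eE: "e \<in> E" "f \<in> E" "e \<noteq> f" using e f TS' S'E by auto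
      have noA: False if A: "A \<in> Q" "e \<in> A" "f \<notin> A" "S \<subseteq> A" "A \<subseteq> S'" for A
      proof -
        have "A - S \<subset> S' - S" using A f e ST by auto
        hence c1: "card (A - S) < n" using n finS' by (metis finite_Diff psubset_card_mono)
        have eS: "insert e S \<in> Q" using IH[OF c1 SQ A(1)] A by auto
        show False
        proof (cases "insert e S = T")
          case True then show ?thesis using eS TQ by simp
        next
          case False
          have "S' - insert e S \<subset> S' - S" using e TS' by auto
          hence "card (S' - insert e S) < n" using n finS' by (metis finite_Diff psubset_card_mono)
          from IH[OF this eS S'Q] e ST TS' TQ show False by auto
        qed
      qed
      define W where "W = (\<Sum>A\<in>Pow E. \<omega> A)"
      define p where "p = \<omega> S * \<omega> S'"
      have ppos: "p > 0" using SQ S'Q wQ unfolding p_def by auto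
      have W0: "W \<ge> 0" unfolding W_def using w0 by (simp add: sum_nonneg)
      define N where "N = W^2 / p + 1"
      have N1: "N \<ge> 1" unfolding N_def using ppos W0 by simp
      have Npos: "N > 0" using N1 by simp
      define y where "y = (\<lambda>x. if x \<in> S then N else if x \<in> S' then 1 else 1 / N)"
      have ypos: "\<forall>x. y x > 0" unfolding y_def using Npos by auto
      have ye: "y e = 1" "y f = 1" unfolding y_def using e f ST TS' by auto
      have prodform: "(\<Prod>x\<in>A. y x) = N ^ card (A \<inter> S) * (1/N) ^ card (A - S')" if "A \<subseteq> E" for A
      proof -
        have finA: "finite A" using that finE finite_subset by blast
        have "(\<Prod>x\<in>A. y x) = (\<Prod>x\<in>A \<inter> S. y x) * (\<Prod>x\<in>A - S. y x)"
          using finA by (metis Diff_eq prod.Int_Diff)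
        also have "(\<Prod>x\<in>A \<inter> S. y x) = N ^ card (A \<inter> S)"
          unfolding y_def by simp
        also have "(\<Prod>x\<in>A - S. y x) = (\<Prod>x\<in>(A - S) \<inter> S'. y x) * (\<Prod>x\<in>(A - S) - S'. y x)"
          using finA by (metis finite_Diff prod.Int_Diff)
        also have "(\<Prod>x\<in>(A - S) \<inter> S'. y x) = 1"
          unfolding y_def by (intro prod.neutral) auto
        also have "(A - S) - S' = A - S'" using ST TS' by auto
        also have "(\<Prod>x\<in>A - S'. y x) = (1/N) ^ card (A - S')"
        proof -
          have "(\<Prod>x\<in>A - S'. y x) = (\<Prod>x\<in>A - S'. 1/N)"
            unfolding y_def using ST TS' by (intro prod.cong) auto
          thus ?thesis by simp
        qed
        finally show ?thesis by simp
      qed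
      define h where "h A = \<omega> A * (\<Prod>x\<in>A. y x)" for A
      have h0: "h A \<ge> 0" for A unfolding h_def using w0 ypos
        by (simp add: less_imp_le prod_nonneg)
      have hle: "\<forall>A\<in>Pow E. 0 \<le> h A" using h0 by simp
      have prem: "(\<Prod>x\<in>A - {e}. y x) = (\<Prod>x\<in>A. y x)" if "A \<in> Pow E" for A
      proof -
        have "finite A" using that finE finite_subset by auto
        from prod_drop_ones[OF this, of "{e}" y] ye show ?thesis by simp
      qed
      have prfm: "(\<Prod>x\<in>A - {f}. y x) = (\<Prod>x\<in>A. y x)" if "A \<in> Pow E" for A
      proof -
        have "finite A" using that finE finite_subset by auto
        from prod_drop_ones[OF this, of "{f}" y] ye show ?thesis by simp
      qed
      have prefm: "\<And>A. A \<in> Pow E \<Longrightarrow> (\<Prod>x\<in>A - {f} - {e}. y x) = (\<Prod>x\<in>A. y x)"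
      proof -
        fix A assume "A \<in> Pow E"
        hence fA: "finite A" using finE finite_subset by auto
        have "A - {f} - {e} = A - {e, f}" by auto
        moreover have "(\<Prod>x\<in>A - {e,f}. y x) = (\<Prod>x\<in>A. y x)"
          using prod_drop_ones[OF fA, of "{e,f}" y] ye by simp
        ultimately show "(\<Prod>x\<in>A - {f} - {e}. y x) = (\<Prod>x\<in>A. y x)" by simp
      qed
      define a where "a = (\<Sum>A\<in>Pow E. if e \<notin> A \<and> f \<notin> A then h A else 0)"
      define b where "b = (\<Sum>A\<in>Pow E. if e \<in> A \<and> f \<notin> A then h A else 0)"
      define c where "c = (\<Sum>A\<in>Pow E. if e \<notin> A \<and> f \<in> A then h A else 0)"
      define d where "d = (\<Sum>A\<in>Pow E. if e \<in> A \<and> f \<in> A then h A else 0)"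
      have Ze: "pderiv1 (Zpoly E \<omega>) e y = b + d"
      proof -
        have "pderiv1 (Zpoly E \<omega>) e y = (\<Sum>A\<in>Pow E. if e \<in> A then \<omega> A * (\<Prod>x\<in>A - {e}. y x) else 0)"
          unfolding pd1[OF finE] by (subst sum.inter_filter[symmetric]) (simp_all add: finE)
        also have "\<dots> = b + d" unfolding b_def d_def sum.distrib[symmetric]
          by (rule sum.cong) (auto simp: prem h_def)
        finally show ?thesis .
      qed
      have Zf: "pderiv1 (Zpoly E \<omega>) f y = c + d"
      proof -
        have "pderiv1 (Zpoly E \<omega>) f y = (\<Sum>A\<in>Pow E. if f \<in> A then \<omega> A * (\<Prod>x\<in>A - {f}. y x) else 0)"
          unfolding pd1[OF finE] by (subst sum.inter_filter[symmetric]) (simp_all add: finE)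
        also have "\<dots> = c + d" unfolding c_def d_def sum.distrib[symmetric]
          by (rule sum.cong) (auto simp: prfm h_def)
        finally show ?thesis .
      qed
      have Zef: "pderiv1 (pderiv1 (Zpoly E \<omega>) f) e y = d"
      proof -
        have "pderiv1 (pderiv1 (Zpoly E \<omega>) f) e y = (\<Sum>A\<in>Pow E. if e \<in> A \<and> f \<in> A then \<omega> A * (\<Prod>x\<in>A - {f} - {e}. y x) else 0)"
        proof -
          have st: "{S \<in> {S\<in>Pow E. f \<in> S}. e \<in> S - {f}} = {A\<in>Pow E. e \<in> A \<and> f \<in> A}"
            using eE(3) by auto
          have fP: "finite (Pow E)" using finE by simp
          show ?thesis unfolding pd2[OF finE] st by (rule sum.inter_filter[OF fP])
        qed
        also have "\<dots> = d" unfolding d_def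
          by (rule sum.cong) (auto simp: prefm h_def)
        finally show ?thesis .
      qed
      have Z: "Zpoly E \<omega> y = a + b + c + d"
        unfolding Zpoly_def a_def b_def c_def d_def sum.distrib[symmetric]
        by (rule sum.cong) (auto simp: h_def)
      have r: "pderiv1 (Zpoly E \<omega>) e y * pderiv1 (Zpoly E \<omega>) f y
          - pderiv1 (pderiv1 (Zpoly E \<omega>) f) e y * Zpoly E \<omega> y \<ge> 0"
        using ray eE ypos unfolding rayleigh_def by blast
      have "(b + d) * (c + d) - d * (a + b + c + d) \<ge> 0"
        using r unfolding Ze Zf Zef Z .
      hence ad: "a * d \<le> b * c" by (simp add: algebra_simps)
      define P where "P = N ^ card S"
      have Ppos: "P > 0" unfolding P_def using Npos by simp
      have hS: "h S = \<omega> S * P" unfolding h_def P_def using prodform[OF SE] TS' ST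
        by (simp add: Diff_eq_empty_iff[THEN iffD2, of S S'])
      have hS': "h S' = \<omega> S' * P" unfolding h_def P_def using prodform[OF S'E] TS' ST
        by (simp add: Int_absorb1)
      have a_lo: "\<omega> S * P \<le> a"
      proof -
        have "(if e \<notin> S \<and> f \<notin> S then h S else 0) \<le> a" unfolding a_def
          by (rule member_le_sum) (use SE hle finE in auto)
        moreover have "f \<notin> S" using f ST by auto
        ultimately show ?thesis using hS e by simp
      qed
      have d_lo: "\<omega> S' * P \<le> d"
      proof -
        have "(if e \<in> S' \<and> f \<in> S' then h S' else 0) \<le> d" unfolding d_def
          by (rule member_le_sum) (use S'E hle finE in auto)
        moreover have "e \<in> S'" using e TS' by auto
        ultimately show ?thesis using hS' f by simp
      qed
      have c_up: "c \<le> W * P"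
      proof -
        have "c \<le> (\<Sum>A\<in>Pow E. \<omega> A * P)" unfolding c_def
        proof (rule sum_mono)
          fix A assume A: "A \<in> Pow E"
          have k: "card (A \<inter> S) \<le> card S" using finS by (simp add: card_mono)
          have "(\<Prod>x\<in>A. y x) \<le> P * 1" unfolding prodform[of A, OF PowD[OF A]] P_def
            apply (rule mult_mono)
            using k N1 Npos by (auto simp: power_increasing power_le_one)
          then show "(if e \<notin> A \<and> f \<in> A then h A else 0) \<le> \<omega> A * P"
            unfolding h_def using w0 Ppos by (auto intro: mult_left_mono)
        qed
        thus ?thesis unfolding W_def by (simp add: sum_distrib_right)
      qed
      have b_up: "b \<le> W * (P / N)"
      proof -
        have "b \<le> (\<Sum>A\<in>Pow E. \<omega> A * (P / N))" unfolding b_def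
        proof (rule sum_mono)
          fix A assume A: "A \<in> Pow E"
          show "(if e \<in> A \<and> f \<notin> A then h A else 0) \<le> \<omega> A * (P / N)"
          proof (cases "e \<in> A \<and> f \<notin> A \<and> \<omega> A > 0")
            case False
            then show ?thesis unfolding h_def using w0 Ppos Npos
              by (auto simp: less_le)
          next
            case True
            have AQ: "A \<in> Q" using True A wQ by auto
            have nsub: "\<not> (S \<subseteq> A \<and> A \<subseteq> S')" using noA AQ True by blast
            have k: "card (A \<inter> S) \<le> card S" using finS by (simp add: card_mono)
            have "(\<Prod>x\<in>A. y x) \<le> P / N"
            proof (cases "S \<subseteq> A")
              case True
              hence "\<not> A \<subseteq> S'" using nsub by auto
              hence "A - S' \<noteq> {}" by auto
              moreover have "finite (A - S')" using A finE finite_subset by auto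
              ultimately have m: "card (A - S') \<ge> 1" by (simp add: Suc_leI card_gt_0_iff)
              have m2: "(1/N) ^ card (A - S') \<le> (1/N) ^ 1"
                by (rule power_decreasing[OF m]) (use N1 in auto)
              have "(\<Prod>x\<in>A. y x) \<le> P * (1/N)" unfolding prodform[of A, OF PowD[OF A]] P_def
                apply (rule mult_mono)
                using k N1 Npos m2 by (auto simp: power_increasing)
              then show ?thesis by simp
            next
              case False
              hence "A \<inter> S \<subset> S" by auto
              hence k2: "card (A \<inter> S) < card S" using finS by (simp add: psubset_card_mono)
              have "(\<Prod>x\<in>A. y x) \<le> N ^ (card S - 1) * 1" unfolding prodform[of A, OF PowD[OF A]]
                apply (rule mult_mono)
                using k2 N1 Npos by (auto simp: power_increasing power_le_one)
              also have "N ^ (card S - 1) = P / N"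
              proof -
                have "card S = Suc (card S - 1)" using k2 by simp
                hence "P = N * N ^ (card S - 1)" unfolding P_def by (metis power_Suc)
                thus ?thesis using Npos by simp
              qed
              finally show ?thesis by simp
            qed
            hence "\<omega> A * (\<Prod>x\<in>A. y x) \<le> \<omega> A * (P / N)"
              using w0 by (intro mult_left_mono) auto
            then show ?thesis using True unfolding h_def by simp
          qed
        qed
        thus ?thesis unfolding W_def by (simp only: sum_distrib_right)
      qed
      have a0: "a \<ge> 0" "b \<ge> 0" "c \<ge> 0" "d \<ge> 0" unfolding a_def b_def c_def d_def
        using h0 by (auto intro: sum_nonneg)
      have "p * P * P \<le> a * d"
        using mult_mono[OF a_lo d_lo] a0 w0 Ppos unfolding p_def
        by (simp add: algebra_simps)
      also have "\<dots> \<le> b * c" by (rule ad)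
      also have "\<dots> \<le> (W * (P / N)) * (W * P)"
        using mult_mono[OF b_up c_up] a0 W0 Ppos Npos by simp
      finally have "p * P * P \<le> (W^2 / N) * (P * P)" by (simp add: power2_eq_square algebra_simps)
      hence "p * (P * P) \<le> (W^2 / N) * (P * P)" by (simp add: mult.assoc)
      hence "p \<le> W^2 / N" using Ppos by (intro mult_right_le_imp_le[of p "P*P"]) auto
      hence "p * N \<le> W^2" using Npos by (simp add: field_simps)
      moreover have "p * N = W^2 + p" unfolding N_def using ppos by (simp add: field_simps)
      ultimately show False using ppos by simp
    qed
  qed
  show ?thesis unfolding convex_setsys_def using main by metis
qed

end
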